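(* Let $n,r\ge1$. The sequence \[ 0\to\mathbb{R}\to\mathcal{S}_r^-\Lambda^0(\mathbb{R}^n)\xrightarrow{d}\mathcal{S}_r^-\Lambda^1(\mathbb{R}^n)\xrightarrow{d}\cdots\xrightarrow{d}\mathcal{S}_r^-\Lambda^{n-1}(\mathbb{R}^n)\xrightarrow{d}\mathcal{S}_r^-\Lambda^n(\mathbb{R}^n)\to0, \] where $\mathbb{R}\to\mathcal{S}_r^-\Lambda^0$ is the inclusion of constant functions and the other maps are the exterior derivative, is exact.
   Context: Fix $n\ge1$. For a multi-index $\alpha\in\mathbb{N}^n$ and a subset $\sigma=\{\sigma(1)<\dots<\sigma(k)\}\subset\{1,\dots,n\}$, the form monomial is $x^\alpha dx_\sigma:=x_1^{\alpha_1}\cdots x_n^{\alpha_n}\,dx_{\sigma(1)}\wedge\cdots\wedge dx_{\sigma(k)}$, of degree $|\alpha|$. $\mathcal{H}_r\Lambda^k(\mathbb{R}^n)$ is the span of form monomials with $|\alpha|=r$, $|\sigma|=k$ (it is $0$ if $r<0$ or $k\notin\{0,\dots,n\}$), and $\mathcal{P}_r\Lambda^k:=\bigoplus_{j=0}^r\mathcal{H}_j\Lambda^k$ ($=0$ if $r<0$). $d$ is the exterior derivative. The Koszul operator $\kappa$ is defined on monomials by $\kappa(x^\alpha dx_\sigma)=\sum_{i=1}^k(-1)^{i+1}x^\alpha x_{\sigma(i)}\,dx_{\sigma(1)}\wedge\cdots\wedge\widehat{dx_{\sigma(i)}}\wedge\cdots\wedge dx_{\sigma(k)}$ and extended linearly.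 The linear degree is $\mathrm{ldeg}(x^\alpha dx_\sigma):=\#\{i\notin\sigma:\alpha_i=1\}$, and $\mathcal{H}_{r,l}\Lambda^k$ is the span of form monomials in $\mathcal{H}_r\Lambda^k$ with linear degree $\ge l$. Define $\mathcal{J}_r\Lambda^k:=\sum_{l\ge1}\kappa\,\mathcal{H}_{r+l-1,l}\Lambda^{k+1}$, the serendipity space $\mathcal{S}_r\Lambda^k:=\mathcal{P}_r\Lambda^k+\mathcal{J}_r\Lambda^k+d\,\mathcal{J}_{r+1}\Lambda^{k-1}$ (forms of degree $-1$ or $n+1$ are $0$), and for $r\ge1$ the trimmed serendipity space $\mathcal{S}_r^-\Lambda^k:=\mathcal{S}_{r-1}\Lambda^k+\kappa\,\mathcal{S}_{r-1}\Lambda^{k+1}$, all on $\mathbb{R}^n$. *)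

theory Defs
  imports Complex_Main
begin

text \<open>Polynomial differential forms on R^n, represented by their coefficient
functions w.r.t. the form monomials x^alpha dx_sigma.  A multi-index alpha is a
function nat => nat (coordinates indexed 0..n-1, alpha i = 0 for i >= n), and
sigma is a subset of {0..<n}.\<close>

type_synonym mindex = "nat \<Rightarrow> nat"
type_synonym pform = "mindex \<times> nat set \<Rightarrow> real"

definition mdeg :: "nat \<Rightarrow> mindex \<Rightarrow> nat" where
  "mdeg n \<alpha> = (\<Sum>i<n. \<alpha> i)"

definition ldeg :: "nat \<Rightarrow> mindex \<Rightarrow> nat set \<Rightarrow> nat" where
  "ldeg n \<alpha> \<sigma> = card {i. i < n \<and> i \<notin> \<sigma> \<and> \<alpha> i = 1}"

definition mspan :: "nat \<Rightarrow> nat \<Rightarrow> (mindex \<Rightarrow> nat set \<Rightarrow> bool) \<Rightarrow> pform set" where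
  "mspan n k P = {c. finite {m. c m \<noteq> 0} \<and>
     (\<forall>\<alpha> \<sigma>. c (\<alpha>, \<sigma>) \<noteq> 0 \<longrightarrow>
        \<sigma> \<subseteq> {..<n} \<and> card \<sigma> = k \<and> (\<forall>i\<ge>n. \<alpha> i = 0) \<and> P \<alpha> \<sigma>)}"

definition Hsp :: "nat \<Rightarrow> nat \<Rightarrow> nat \<Rightarrow> pform set" where
  "Hsp n r k = mspan n k (\<lambda>\<alpha> \<sigma>. mdeg n \<alpha> = r)"

definition Hlsp :: "nat \<Rightarrow> nat \<Rightarrow> nat \<Rightarrow> nat \<Rightarrow> pform set" where
  "Hlsp n r l k = mspan n k (\<lambda>\<alpha> \<sigma>. mdeg n \<alpha> = r \<and> ldeg n \<alpha> \<sigma> \<ge> l)"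

definition Psp :: "nat \<Rightarrow> nat \<Rightarrow> nat \<Rightarrow> pform set" where
  "Psp n r k = mspan n k (\<lambda>\<alpha> \<sigma>. mdeg n \<alpha> \<le> r)"

text \<open>Exterior derivative: d(x^alpha dx_sigma) = sum_{j notin sigma} alpha_j
x^(alpha - e_j) dx_j /\ dx_sigma, written on coefficients.\<close>
definition extd :: "pform \<Rightarrow> pform" where
  "extd c = (\<lambda>(\<beta>, \<tau>). \<Sum>j\<in>\<tau>. (-1) ^ card {i\<in>\<tau>. i < j} *
      real (\<beta> j + 1) * c (\<beta>(j := \<beta> j + 1), \<tau> - {j}))"

text \<open>Koszul operator on coefficients (the sign (-1)^(i+1) for sigma(i) equals
(-1)^(number of elements of sigma below sigma(i))).\<close>
definition koszul :: "nat \<Rightarrow> pform \<Rightarrow> pform" where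
  "koszul n c = (\<lambda>(\<beta>, \<tau>). \<Sum>j\<in>{j. j < n \<and> j \<notin> \<tau> \<and> 1 \<le> \<beta> j}.
      (-1) ^ card {i\<in>\<tau>. i < j} * c (\<beta>(j := \<beta> j - 1), insert j \<tau>))"

definition sumsp :: "(nat \<Rightarrow> pform set) \<Rightarrow> nat set \<Rightarrow> pform set" where
  "sumsp V I = {c. \<exists>L f. finite L \<and> L \<subseteq> I \<and> (\<forall>l\<in>L. f l \<in> V l) \<and>
                      c = (\<lambda>m. \<Sum>l\<in>L. f l m)}"

definition Jsp :: "nat \<Rightarrow> nat \<Rightarrow> nat \<Rightarrow> pform set" where
  "Jsp n r k = sumsp (\<lambda>l. koszul n ` Hlsp n (r + l - 1) l (k + 1)) {1..}"

definition Ssp :: "nat \<Rightarrow> nat \<Rightarrow> nat \<Rightarrow> pform set" where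
  "Ssp n r k = {(\<lambda>m. a m + b m + e m) | a b e.
      a \<in> Psp n r k \<and> b \<in> Jsp n r k \<and>
      e \<in> (if k = 0 then {(\<lambda>_. 0)} else extd ` Jsp n (r + 1) (k - 1))}"

text \<open>Trimmed serendipity space, for r >= 1.\<close>
definition Smsp :: "nat \<Rightarrow> nat \<Rightarrow> nat \<Rightarrow> pform set" where
  "Smsp n r k = {(\<lambda>m. a m + b m) | a b.
      a \<in> Ssp n (r - 1) k \<and> b \<in> koszul n ` Ssp n (r - 1) (k + 1)}"

definition constf :: "real \<Rightarrow> pform" where
  "constf a = (\<lambda>(\<alpha>, \<sigma>). if \<alpha> = (\<lambda>_. 0) \<and> \<sigma> = {} then a else 0)"

end

theory Submission
  imports Defs
begin

definition sg :: "nat set \<Rightarrow> nat \<Rightarrow> real" where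
  "sg \<tau> j = (-1) ^ card {i\<in>\<tau>. i < j}"

lemma sg_remove_self: "sg (\<tau> - {j}) j = sg \<tau> j"
  unfolding sg_def by (rule arg_cong[where f="\<lambda>x. (-1) ^ card x"]) auto

lemma sg_insert_self: "sg (insert j \<tau>) j = sg \<tau> j"
  unfolding sg_def by (rule arg_cong[where f="\<lambda>x. (-1) ^ card x"]) auto

lemma sg_sq: "sg \<tau> j * sg \<tau> j = 1"
  unfolding sg_def by (simp add: power_mult_distrib[symmetric])

lemma sg_remove_less:
  assumes "j \<in> \<tau>" "j < i"
  shows "sg \<tau> i = - sg (\<tau> - {j}) i"
proof -
  have e: "{t\<in>\<tau>. t < i} = insert j {t\<in>\<tau> - {j}. t < i}" using assms by auto
  have f: "finite {t\<in>\<tau> - {j}. t < i}" by (rule finite_subset[of _ "{..<i}"]) auto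
  show ?thesis unfolding sg_def e using f by simp
qed

lemma sg_remove_ge:
  assumes "\<not> j < i"
  shows "sg (\<tau> - {j}) i = sg \<tau> i"
  unfolding sg_def by (rule arg_cong[where f="\<lambda>x. (-1) ^ card x"]) (use assms in auto)

lemma sg_insert_less:
  assumes "j \<notin> \<tau>" "j < i"
  shows "sg (insert j \<tau>) i = - sg \<tau> i"
  using sg_remove_less[of j "insert j \<tau>" i] assms by simp

lemma sg_insert_ge:
  assumes "\<not> j < i"
  shows "sg (insert j \<tau>) i = sg \<tau> i"
  unfolding sg_def by (rule arg_cong[where f="\<lambda>x. (-1) ^ card x"]) (use assms in auto)

lemma S1: assumes "j \<in> \<tau>" "i \<in> \<tau>" "i \<noteq> j"
  shows "sg \<tau> j * sg (\<tau> - {j}) i = - (sg \<tau> i * sg (\<tau> - {i}) j)"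
proof (cases "j < i")
  case True
  then show ?thesis using sg_remove_less[OF assms(1) True] sg_remove_ge[of i j \<tau>] by simp
next
  case False
  then have "i < j" using assms by simp
  then show ?thesis using sg_remove_less[OF assms(2) \<open>i<j\<close>] sg_remove_ge[of j i \<tau>] False by simp
qed

lemma S2: assumes "j \<notin> \<tau>" "i \<notin> \<tau>" "i \<noteq> j"
  shows "sg \<tau> j * sg (insert j \<tau>) i = - (sg \<tau> i * sg (insert i \<tau>) j)"
proof (cases "j < i")
  case True
  then show ?thesis using sg_insert_less[OF assms(1) True] sg_insert_ge[of i j \<tau>] by simp
next
  case False
  then have "i < j" using assms by simp
  then show ?thesis using sg_insert_less[OF assms(2) \<open>i<j\<close>] sg_insert_ge[of j i \<tau>] False by simp
qed

lemma S3: assumes "j \<in> \<tau>" "i \<notin> \<tau>"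
  shows "sg \<tau> j * sg (\<tau> - {j}) i = - (sg \<tau> i * sg (insert i \<tau>) j)"
proof (cases "j < i")
  case True
  then show ?thesis using sg_remove_less[OF assms(1) True] sg_insert_ge[of i j \<tau>] by simp
next
  case False
  then have "i < j" using assms by (metis linorder_neqE_nat)
  then show ?thesis using sg_insert_less[OF assms(2) \<open>i<j\<close>] sg_remove_ge[of j i \<tau>] False by simp
qed

lemma antisym_sum:
  assumes "finite A" "\<And>x y. x \<in> A \<Longrightarrow> y \<in> A \<Longrightarrow> x \<noteq> y \<Longrightarrow> G x y = - G y x"
  shows "(\<Sum>x\<in>A. \<Sum>y\<in>A-{x}. G x y) = (0::real)"
proof -
  define S where "S = Sigma A (\<lambda>x. A - {x})"
  have 1: "(\<Sum>x\<in>A. \<Sum>y\<in>A-{x}. G x y) = (\<Sum>p\<in>S. G (fst p) (snd p))"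
    unfolding S_def using assms(1) by (subst sum.Sigma) (auto simp: split_def)
  have sw: "prod.swap ` S = S" unfolding S_def by force
  have 2: "(\<Sum>p\<in>S. G (snd p) (fst p)) = (\<Sum>p\<in>prod.swap ` S. G (fst p) (snd p))"
      by (subst sum.reindex) (auto simp: o_def)
  have 3: "(\<Sum>p\<in>S. G (snd p) (fst p)) = (\<Sum>p\<in>S. - G (fst p) (snd p))"
  proof (rule sum.cong)
    fix p assume "p \<in> S"
    then obtain x y where p: "p = (x,y)" "x \<in> A" "y \<in> A" "x \<noteq> y" unfolding S_def by auto
    show "G (snd p) (fst p) = - G (fst p) (snd p)" using assms(2)[of y x] p by simp
  qed simp
  have "(\<Sum>p\<in>S. G (fst p) (snd p)) = - (\<Sum>p\<in>S. G (fst p) (snd p))"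
    using 2 3 sw by (simp add: sum_negf)
  then show ?thesis using 1 by simp
qed

definition Ib :: "nat \<Rightarrow> mindex \<Rightarrow> nat set \<Rightarrow> nat set" where
  "Ib n \<beta> \<tau> = {j. j < n \<and> j \<notin> \<tau> \<and> 1 \<le> \<beta> j}"

lemma finite_Ib[simp]: "finite (Ib n \<beta> \<tau>)"
  by (rule finite_subset[of _ "{..<n}"]) (auto simp: Ib_def)

lemma koszul_eq: "koszul n c (\<beta>,\<tau>) = (\<Sum>j\<in>Ib n \<beta> \<tau>. sg \<tau> j * c (\<beta>(j:=\<beta> j - 1), insert j \<tau>))"
  unfolding koszul_def Ib_def sg_def by simp

lemma extd_eq: "extd c (\<beta>,\<tau>) = (\<Sum>j\<in>\<tau>. sg \<tau> j * real (\<beta> j + 1) * c (\<beta>(j:=\<beta> j + 1), \<tau> - {j}))"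
  unfolding extd_def sg_def by simp

lemma mdeg_upd: "j < n \<Longrightarrow> mdeg n (\<beta>(j:=v)) + \<beta> j = mdeg n \<beta> + v"
proof -
  assume j: "j < n"
  have "mdeg n (\<beta>(j:=v)) = v + (\<Sum>i\<in>{..<n}-{j}. \<beta> i)"
    unfolding mdeg_def using j by (subst sum.remove[of _ j]) (auto intro!: sum.cong)
  moreover have "mdeg n \<beta> = \<beta> j + (\<Sum>i\<in>{..<n}-{j}. \<beta> i)"
    unfolding mdeg_def using j by (subst sum.remove[of _ j]) auto
  ultimately show ?thesis by simp
qed

lemma mdeg_upd_ge: "\<not> j < n \<Longrightarrow> mdeg n (\<beta>(j:=v)) = mdeg n \<beta>"
  unfolding mdeg_def by (rule sum.cong) auto

lemma homotopy:
  assumes fin: "finite \<tau>"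
  shows "extd (koszul n c) (\<beta>,\<tau>) + koszul n (extd c) (\<beta>,\<tau>)
     = real (mdeg n \<beta> + card (\<tau> \<inter> {..<n})) * c (\<beta>,\<tau>)"
proof -
  let ?I = "Ib n \<beta> \<tau>"
  define X where "X j i = sg \<tau> j * real (\<beta> j + 1) * (sg (\<tau>-{j}) i * c (\<beta>(j:=\<beta> j+1, i:=\<beta> i - 1), insert i (\<tau>-{j})))" for j i
  define Y where "Y i j = sg \<tau> i * (sg (insert i \<tau>) j * real (\<beta> j + 1) * c (\<beta>(i:=\<beta> i - 1, j:=\<beta> j+1), insert i \<tau> - {j}))" for i j
  have K: "koszul n c (\<beta>(j:=\<beta> j+1), \<tau>-{j}) = (if j<n then sg \<tau> j * c(\<beta>,\<tau>) else 0)
     + (\<Sum>i\<in>?I. sg (\<tau>-{j}) i * c(\<beta>(j:=\<beta> j+1, i:=\<beta> i - 1), insert i (\<tau>-{j})))" if j: "j \<in> \<tau>" for j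
  proof -
    have set: "Ib n (\<beta>(j:=\<beta> j+1)) (\<tau>-{j}) = (if j<n then insert j ?I else ?I)" using j by (auto simp: Ib_def)
    have jI: "j \<notin> ?I" using j by (auto simp: Ib_def)
    have rest: "(\<Sum>i\<in>?I. sg (\<tau>-{j}) i * c ((\<beta>(j:=\<beta> j+1))(i := (\<beta>(j:=\<beta> j+1)) i - 1), insert i (\<tau>-{j})))
        = (\<Sum>i\<in>?I. sg (\<tau>-{j}) i * c(\<beta>(j:=\<beta> j+1, i:=\<beta> i - 1), insert i (\<tau>-{j})))"
      by (rule sum.cong) (use jI in auto)
    have jt: "sg (\<tau>-{j}) j * c ((\<beta>(j:=\<beta> j+1))(j := (\<beta>(j:=\<beta> j+1)) j - 1), insert j (\<tau>-{j})) = sg \<tau> j * c(\<beta>,\<tau>)"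
      using j by (simp add: sg_remove_self insert_absorb)
    show ?thesis
    proof (cases "j < n")
      case True
      then show ?thesis unfolding koszul_eq set using jI rest jt by (simp add: sum.insert)
    next
      case False
      then show ?thesis unfolding koszul_eq set using rest by simp
    qed
  qed
  have LHS1: "extd (koszul n c) (\<beta>,\<tau>) = (\<Sum>j\<in>\<tau>. if j<n then real (\<beta> j+1) * c(\<beta>,\<tau>) else 0) + (\<Sum>j\<in>\<tau>. \<Sum>i\<in>?I. X j i)"
  proof -
    have "extd (koszul n c) (\<beta>,\<tau>) = (\<Sum>j\<in>\<tau>. (if j<n then real (\<beta> j+1) * c(\<beta>,\<tau>) else 0) + (\<Sum>i\<in>?I. X j i))"
      unfolding extd_eq
    proof (rule sum.cong)
      fix j assume j: "j \<in> \<tau>"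
      have "sg \<tau> j * real (\<beta> j + 1) * (if j<n then sg \<tau> j * c(\<beta>,\<tau>) else 0) = (if j<n then real (\<beta> j+1) * c(\<beta>,\<tau>) else 0)"
      proof -
        have ss: "\<And>x. sg \<tau> j * (sg \<tau> j * x) = x" using sg_sq[of \<tau> j] by (simp add: mult.assoc[symmetric])
        have "sg \<tau> j * real (\<beta> j + 1) * (sg \<tau> j * c(\<beta>,\<tau>)) = real(\<beta> j+1) * (sg \<tau> j * (sg \<tau> j * c(\<beta>,\<tau>)))"
          by (simp only: ac_simps)
        then show ?thesis using ss by simp
      qed
      then show "sg \<tau> j * real (\<beta> j + 1) * koszul n c (\<beta>(j := \<beta> j + 1), \<tau> - {j}) =
         (if j < n then real (\<beta> j + 1) * c (\<beta>, \<tau>) else 0) + (\<Sum>i\<in>?I. X j i)"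
        unfolding K[OF j] X_def by (simp add: distrib_left sum_distrib_left)
    qed simp
    then show ?thesis by (simp add: sum.distrib)
  qed
  have E: "extd c (\<beta>(i:=\<beta> i - 1), insert i \<tau>) = sg \<tau> i * real (\<beta> i) * c(\<beta>,\<tau>)
      + (\<Sum>j\<in>\<tau>. sg (insert i \<tau>) j * real (\<beta> j + 1) * c(\<beta>(i:=\<beta> i - 1, j:=\<beta> j+1), insert i \<tau> - {j}))"
    if i: "i \<in> ?I" for i
  proof -
    have it: "i \<notin> \<tau>" "1 \<le> \<beta> i" using i by (auto simp: Ib_def)
    have upd: "\<beta>(i := \<beta> i - 1, i := \<beta> i - 1 + 1) = \<beta>" using it by auto
    have r: "real (\<beta> i - 1 + 1) = real (\<beta> i)" using it by simp
    show ?thesis unfolding extd_eq using it fin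
      by (simp add: sum.insert sg_insert_self upd r) (rule sum.cong, auto)
  qed
  have LHS2: "koszul n (extd c) (\<beta>,\<tau>) = (\<Sum>i\<in>?I. real (\<beta> i) * c(\<beta>,\<tau>)) + (\<Sum>i\<in>?I. \<Sum>j\<in>\<tau>. Y i j)"
  proof -
    have "koszul n (extd c) (\<beta>,\<tau>) = (\<Sum>i\<in>?I. real (\<beta> i) * c(\<beta>,\<tau>) + (\<Sum>j\<in>\<tau>. Y i j))"
      unfolding koszul_eq
    proof (rule sum.cong)
      fix i assume i: "i \<in> ?I"
      show "sg \<tau> i * extd c (\<beta>(i := \<beta> i - 1), insert i \<tau>) = real (\<beta> i) * c (\<beta>, \<tau>) + (\<Sum>j\<in>\<tau>. Y i j)"
        unfolding E[OF i] Y_def using sg_sq[of \<tau> i]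
        by (simp add: distrib_left sum_distrib_left algebra_simps)
    qed simp
    then show ?thesis by (simp add: sum.distrib)
  qed
  have XY: "Y i j = - X j i" if i: "i \<in> ?I" and j: "j \<in> \<tau>" for i j
  proof -
    have it: "i \<notin> \<tau>" using i by (auto simp: Ib_def)
    then have ij: "i \<noteq> j" using j by auto
    have f: "\<beta>(i:=\<beta> i - 1, j:=\<beta> j+1) = \<beta>(j:=\<beta> j+1, i:=\<beta> i - 1)" using ij by (rule fun_upd_twist)
    have s: "insert i \<tau> - {j} = insert i (\<tau>-{j})" using ij by auto
    have sg: "sg \<tau> j * sg (\<tau> - {j}) i = - (sg \<tau> i * sg (insert i \<tau>) j)" by (rule S3[OF j it])
    define Z where "Z = real (\<beta> j + 1) * c (\<beta>(j:=\<beta> j+1, i:=\<beta> i - 1), insert i (\<tau>-{j}))"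
    have y: "Y i j = (sg \<tau> i * sg (insert i \<tau>) j) * Z" unfolding Y_def f s Z_def by (simp only: ac_simps)
    have x: "X j i = (sg \<tau> j * sg (\<tau> - {j}) i) * Z" unfolding X_def Z_def by (simp only: ac_simps)
    show ?thesis unfolding x y sg by simp
  qed
  have cross: "(\<Sum>j\<in>\<tau>. \<Sum>i\<in>?I. X j i) + (\<Sum>i\<in>?I. \<Sum>j\<in>\<tau>. Y i j) = 0"
  proof -
    have "(\<Sum>i\<in>?I. \<Sum>j\<in>\<tau>. Y i j) = (\<Sum>i\<in>?I. \<Sum>j\<in>\<tau>. - X j i)"
      by (rule sum.cong[OF refl], rule sum.cong[OF refl]) (rule XY)
    also have "\<dots> = - (\<Sum>j\<in>\<tau>. \<Sum>i\<in>?I. X j i)"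
      by (subst sum.swap) (simp add: sum_negf)
    finally show ?thesis by simp
  qed
  have diag: "(\<Sum>j\<in>\<tau>. if j<n then \<beta> j+1 else 0) + (\<Sum>i\<in>?I. \<beta> i) = mdeg n \<beta> + card (\<tau> \<inter> {..<n})"
  proof -
    have a: "(\<Sum>j\<in>\<tau>. if j<n then \<beta> j+1 else 0) = (\<Sum>j\<in>\<tau> \<inter> {..<n}. \<beta> j + 1)"
      using fin by (simp add: sum.If_cases Int_def)
    have b: "(\<Sum>j\<in>\<tau> \<inter> {..<n}. \<beta> j + 1) = (\<Sum>j\<in>\<tau> \<inter> {..<n}. \<beta> j) + card (\<tau> \<inter> {..<n})"
      by (simp add: sum.distrib del: add_Suc_right One_nat_def)
    have c: "(\<Sum>i\<in>?I. \<beta> i) = (\<Sum>i\<in>{..<n} - \<tau>. \<beta> i)"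
      by (rule sum.mono_neutral_left) (auto simp: Ib_def)
    have d: "mdeg n \<beta> = (\<Sum>i\<in>{..<n} \<inter> \<tau>. \<beta> i) + (\<Sum>i\<in>{..<n} - \<tau>. \<beta> i)"
      unfolding mdeg_def by (rule sum.Int_Diff) simp
    show ?thesis using a b c d by (simp add: Int_commute)
  qed
  have diagr: "(\<Sum>j\<in>\<tau>. if j<n then real (\<beta> j+1) * c(\<beta>,\<tau>) else 0) + (\<Sum>i\<in>?I. real (\<beta> i) * c(\<beta>,\<tau>))
     = real (mdeg n \<beta> + card (\<tau> \<inter> {..<n})) * c (\<beta>,\<tau>)"
  proof -
    have d1: "real (\<Sum>j\<in>\<tau>. if j<n then \<beta> j+1 else 0) * c(\<beta>,\<tau>) = (\<Sum>j\<in>\<tau>. if j<n then real (\<beta> j+1) * c(\<beta>,\<tau>) else 0)"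
      unfolding of_nat_sum sum_distrib_right by (rule sum.cong) auto
    have d2: "real (\<Sum>i\<in>?I. \<beta> i) * c(\<beta>,\<tau>) = (\<Sum>i\<in>?I. real (\<beta> i) * c(\<beta>,\<tau>))"
      unfolding of_nat_sum sum_distrib_right ..
    have "real ((\<Sum>j\<in>\<tau>. if j<n then \<beta> j+1 else 0) + (\<Sum>i\<in>?I. \<beta> i)) * c(\<beta>,\<tau>) =
      (\<Sum>j\<in>\<tau>. if j<n then real (\<beta> j+1) * c(\<beta>,\<tau>) else 0) + (\<Sum>i\<in>?I. real (\<beta> i) * c(\<beta>,\<tau>))"
      unfolding of_nat_add distrib_right d1 d2 ..
    then show ?thesis using diag by simp
  qed
  show ?thesis unfolding LHS1 LHS2 using cross diagr by simp
qed

lemma sum_infinite_real: "infinite A \<Longrightarrow> sum (f::nat\<Rightarrow>real) A = 0" by simp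

lemma extd_extd: "extd (extd c) = (\<lambda>_. 0)"
proof (rule ext, clarify)
  fix \<beta> \<tau>
  show "extd (extd c) (\<beta>,\<tau>) = 0"
  proof (cases "finite \<tau>")
    case False then show ?thesis by (simp add: extd_eq)
  next
    case fin: True
    define G where "G j i = sg \<tau> j * sg (\<tau>-{j}) i * (real (\<beta> j + 1) * real (\<beta> i + 1) * c (\<beta>(j:=\<beta> j+1, i:=\<beta> i+1), \<tau>-{j}-{i}))" for j i
    have "extd (extd c) (\<beta>,\<tau>) = (\<Sum>j\<in>\<tau>. \<Sum>i\<in>\<tau>-{j}. G j i)"
      unfolding extd_eq
    proof (rule sum.cong[OF refl])
      fix j assume j: "j \<in> \<tau>"
      show "sg \<tau> j * real (\<beta> j + 1) * (\<Sum>i\<in>\<tau> - {j}. sg (\<tau> - {j}) i * real ((\<beta>(j := \<beta> j + 1)) i + 1) *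
               c ((\<beta>(j := \<beta> j + 1))(i := (\<beta>(j := \<beta> j + 1)) i + 1), \<tau> - {j} - {i})) = (\<Sum>i\<in>\<tau>-{j}. G j i)"
        unfolding sum_distrib_left
      proof (rule sum.cong[OF refl])
        fix i assume i: "i \<in> \<tau> - {j}"
        then have ij: "i \<noteq> j" by auto
        show "sg \<tau> j * real (\<beta> j + 1) * (sg (\<tau> - {j}) i * real ((\<beta>(j := \<beta> j + 1)) i + 1) *
               c ((\<beta>(j := \<beta> j + 1))(i := (\<beta>(j := \<beta> j + 1)) i + 1), \<tau> - {j} - {i})) = G j i"
        proof -
          have b: "(\<beta>(j:=\<beta> j+1)) i = \<beta> i" using ij by simp
          show ?thesis unfolding G_def b by (simp only: ac_simps)
        qed
      qed
    qed
    also have "\<dots> = 0"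
    proof (rule antisym_sum[OF fin])
      fix x y assume xy: "x \<in> \<tau>" "y \<in> \<tau>" "x \<noteq> y"
      have f: "\<beta>(x:=\<beta> x+1, y:=\<beta> y+1) = \<beta>(y:=\<beta> y+1, x:=\<beta> x+1)" using xy(3) by (rule fun_upd_twist)
      have s: "\<tau>-{x}-{y} = \<tau>-{y}-{x}" by auto
      define Z where "Z = real (\<beta> x + 1) * real (\<beta> y + 1) * c (\<beta>(x:=\<beta> x+1, y:=\<beta> y+1), \<tau>-{x}-{y})"
      have g1: "G x y = sg \<tau> x * sg (\<tau>-{x}) y * Z" unfolding G_def Z_def ..
      have g2: "G y x = sg \<tau> y * sg (\<tau>-{y}) x * Z" unfolding G_def Z_def f s by (simp only: ac_simps)
      show "G x y = - G y x" unfolding g1 g2 using S1[OF xy(1) xy(2) xy(3)[symmetric]] by simp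
    qed
    finally show ?thesis .
  qed
qed

lemma Ib_upd: "j \<in> Ib n \<beta> \<tau> \<Longrightarrow> Ib n (\<beta>(j:=\<beta> j - 1)) (insert j \<tau>) = Ib n \<beta> \<tau> - {j}"
  by (auto simp: Ib_def)

lemma koszul_koszul: "koszul n (koszul n c) = (\<lambda>_. 0)"
proof (rule ext, clarify)
  fix \<beta> \<tau>
  let ?I = "Ib n \<beta> \<tau>"
  define G where "G j i = sg \<tau> j * sg (insert j \<tau>) i * c (\<beta>(j:=\<beta> j - 1, i:=\<beta> i - 1), insert i (insert j \<tau>))" for j i
  have "koszul n (koszul n c) (\<beta>,\<tau>) = (\<Sum>j\<in>?I. \<Sum>i\<in>?I-{j}. G j i)"
    unfolding koszul_eq
  proof (rule sum.cong[OF refl])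
    fix j assume j: "j \<in> ?I"
    show "sg \<tau> j * (\<Sum>i\<in>Ib n (\<beta>(j := \<beta> j - 1)) (insert j \<tau>). sg (insert j \<tau>) i *
          c ((\<beta>(j := \<beta> j - 1))(i := (\<beta>(j := \<beta> j - 1)) i - 1), insert i (insert j \<tau>))) = (\<Sum>i\<in>?I-{j}. G j i)"
      unfolding sum_distrib_left Ib_upd[OF j]
    proof (rule sum.cong[OF refl])
      fix i assume i: "i \<in> ?I - {j}"
      then have ij: "i \<noteq> j" by auto
      show "sg \<tau> j * (sg (insert j \<tau>) i * c ((\<beta>(j := \<beta> j - 1))(i := (\<beta>(j := \<beta> j - 1)) i - 1), insert i (insert j \<tau>))) = G j i"
      proof -
        have b: "(\<beta>(j:=\<beta> j - 1)) i = \<beta> i" using ij by simp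
        show ?thesis unfolding G_def b by (simp only: ac_simps)
      qed
    qed
  qed
  also have "\<dots> = 0"
  proof (rule antisym_sum[OF finite_Ib])
    fix x y assume xy: "x \<in> ?I" "y \<in> ?I" "x \<noteq> y"
    have f: "\<beta>(x:=\<beta> x - 1, y:=\<beta> y - 1) = \<beta>(y:=\<beta> y - 1, x:=\<beta> x - 1)" using xy(3) by (rule fun_upd_twist)
    have s: "insert y (insert x \<tau>) = insert x (insert y \<tau>)" by auto
    define Z where "Z = c (\<beta>(x:=\<beta> x - 1, y:=\<beta> y - 1), insert y (insert x \<tau>))"
    have g1: "G x y = sg \<tau> x * sg (insert x \<tau>) y * Z" unfolding G_def Z_def ..
    have g2: "G y x = sg \<tau> y * sg (insert y \<tau>) x * Z" unfolding G_def Z_def f s ..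
    have xt: "x \<notin> \<tau>" "y \<notin> \<tau>" using xy by (auto simp: Ib_def)
    show "G x y = - G y x" unfolding g1 g2 using S2[OF xt(1) xt(2) xy(3)[symmetric]] by simp
  qed
  finally show "koszul n (koszul n c) (\<beta>,\<tau>) = 0" .
qed

lemma extd_add: "extd (\<lambda>m. x m + y m) = (\<lambda>m. extd x m + extd y m)"
  unfolding extd_def by (auto simp: sum.distrib algebra_simps)

lemma koszul_add: "koszul n (\<lambda>m. x m + y m) = (\<lambda>m. koszul n x m + koszul n y m)"
  unfolding koszul_def by (auto simp: sum.distrib algebra_simps)

lemma extd_zero: "extd (\<lambda>_. 0) = (\<lambda>_. 0)"
  unfolding extd_def by auto

lemma koszul_zero: "koszul n (\<lambda>_. 0) = (\<lambda>_. 0)"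
  unfolding koszul_def by auto

lemma extd_sum: "finite L \<Longrightarrow> extd (\<lambda>m. \<Sum>l\<in>L. f l m) = (\<lambda>m. \<Sum>l\<in>L. extd (f l) m)"
proof (induction L rule: finite_induct)
  case empty then show ?case by (simp add: extd_zero)
next
  case (insert x F)
  then show ?case using extd_add[of "f x" "\<lambda>m. \<Sum>l\<in>F. f l m"] by simp
qed

lemma koszul_sum: "finite L \<Longrightarrow> koszul n (\<lambda>m. \<Sum>l\<in>L. f l m) = (\<lambda>m. \<Sum>l\<in>L. koszul n (f l) m)"
proof (induction L rule: finite_induct)
  case empty then show ?case by (simp add: koszul_zero)
next
  case (insert x F)
  then show ?case using koszul_add[of n "f x" "\<lambda>m. \<Sum>l\<in>F. f l m"] by simp
qed

definition Nw :: "nat \<Rightarrow> mindex \<times> nat set \<Rightarrow> nat" where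
  "Nw n m = (if finite (snd m) then mdeg n (fst m) + card (snd m \<inter> {..<n}) else 0)"

definition scl :: "(mindex \<times> nat set \<Rightarrow> real) \<Rightarrow> pform \<Rightarrow> pform" where
  "scl w c = (\<lambda>m. w m * c m)"

lemma Nw_k: assumes "j < n" "j \<notin> \<tau>" "1 \<le> \<beta> j"
  shows "Nw n (\<beta>(j:=\<beta> j - 1), insert j \<tau>) = Nw n (\<beta>,\<tau>)"
proof (cases "finite \<tau>")
  case True
  have m: "mdeg n (\<beta>(j:=\<beta> j - 1)) + \<beta> j = mdeg n \<beta> + (\<beta> j - 1)" using mdeg_upd[OF assms(1)] .
  have c: "insert j \<tau> \<inter> {..<n} = insert j (\<tau> \<inter> {..<n})" using assms by auto
  have c2: "card (insert j (\<tau> \<inter> {..<n})) = Suc (card (\<tau> \<inter> {..<n}))" using True assms by simp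
  show ?thesis unfolding Nw_def using True m c c2 assms(3) by simp
next
  case False then show ?thesis unfolding Nw_def by simp
qed

lemma Nw_d: assumes "j \<in> \<tau>"
  shows "Nw n (\<beta>(j:=\<beta> j + 1), \<tau> - {j}) = Nw n (\<beta>,\<tau>)"
proof (cases "finite \<tau>")
  case True
  show ?thesis
  proof (cases "j < n")
    case jn: True
    have m: "mdeg n (\<beta>(j:=\<beta> j + 1)) + \<beta> j = mdeg n \<beta> + (\<beta> j + 1)" using mdeg_upd[OF jn] .
    have c: "\<tau> \<inter> {..<n} = insert j ((\<tau> - {j}) \<inter> {..<n})" using assms jn by auto
    have c2: "card (insert j ((\<tau> - {j}) \<inter> {..<n})) = Suc (card ((\<tau>-{j}) \<inter> {..<n}))" using True by simp
    show ?thesis unfolding Nw_def using True m c c2 by simp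
  next
    case False
    have c: "(\<tau>-{j}) \<inter> {..<n} = \<tau> \<inter> {..<n}" using False by auto
    show ?thesis unfolding Nw_def using True c mdeg_upd_ge[OF False] by simp
  qed
next
  case False then show ?thesis unfolding Nw_def by simp
qed

lemma koszul_scl: "koszul n (scl (\<lambda>m. \<phi> (Nw n m)) c) = scl (\<lambda>m. \<phi> (Nw n m)) (koszul n c)"
proof (rule ext, clarify)
  fix \<beta> \<tau>
  show "koszul n (scl (\<lambda>m. \<phi> (Nw n m)) c) (\<beta>,\<tau>) = scl (\<lambda>m. \<phi> (Nw n m)) (koszul n c) (\<beta>,\<tau>)"
    unfolding koszul_eq scl_def sum_distrib_left
  proof (rule sum.cong[OF refl])
    fix x assume "x \<in> Ib n \<beta> \<tau>"
    then have "Nw n (\<beta>(x:=\<beta> x - 1), insert x \<tau>) = Nw n (\<beta>,\<tau>)" by (intro Nw_k) (auto simp: Ib_def)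
    then show "sg \<tau> x * (\<phi> (Nw n (\<beta>(x := \<beta> x - 1), insert x \<tau>)) * c (\<beta>(x := \<beta> x - 1), insert x \<tau>)) =
         \<phi> (Nw n (\<beta>, \<tau>)) * (sg \<tau> x * c (\<beta>(x := \<beta> x - 1), insert x \<tau>))" by simp
  qed
qed

lemma extd_scl: "extd (scl (\<lambda>m. \<phi> (Nw n m)) c) = scl (\<lambda>m. \<phi> (Nw n m)) (extd c)"
proof (rule ext, clarify)
  fix \<beta> \<tau>
  show "extd (scl (\<lambda>m. \<phi> (Nw n m)) c) (\<beta>,\<tau>) = scl (\<lambda>m. \<phi> (Nw n m)) (extd c) (\<beta>,\<tau>)"
    unfolding extd_eq scl_def sum_distrib_left
  proof (rule sum.cong[OF refl])
    fix x assume "x \<in> \<tau>"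
    then have "Nw n (\<beta>(x:=\<beta> x + 1), \<tau> - {x}) = Nw n (\<beta>,\<tau>)" by (rule Nw_d)
    then show "sg \<tau> x * real (\<beta> x + 1) * (\<phi> (Nw n (\<beta>(x := \<beta> x + 1), \<tau> - {x})) * c (\<beta>(x := \<beta> x + 1), \<tau> - {x})) =
         \<phi> (Nw n (\<beta>, \<tau>)) * (sg \<tau> x * real (\<beta> x + 1) * c (\<beta>(x := \<beta> x + 1), \<tau> - {x}))" by simp
  qed
qed

lemma homotopy_all: "extd (koszul n c) m + koszul n (extd c) m = real (Nw n m) * c m"
proof (cases m)
  case (Pair \<beta> \<tau>)
  show ?thesis
  proof (cases "finite \<tau>")
    case True then show ?thesis unfolding Pair Nw_def using homotopy[OF True] by simp
  next
    case False
    have "extd (koszul n c) (\<beta>,\<tau>) = 0" using False by (simp add: extd_eq)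
    moreover have "koszul n (extd c) (\<beta>,\<tau>) = 0" using False unfolding koszul_eq by (simp add: extd_eq)
    ultimately show ?thesis unfolding Pair Nw_def using False by simp
  qed
qed

definition cl :: "pform set \<Rightarrow> bool" where
  "cl A \<longleftrightarrow> (\<lambda>_. 0) \<in> A \<and> (\<forall>x\<in>A. \<forall>y\<in>A. (\<lambda>m. x m + y m) \<in> A)"

lemma cl_sum: assumes "cl A" shows "finite L \<Longrightarrow> (\<forall>l\<in>L. f l \<in> A) \<Longrightarrow> (\<lambda>m. \<Sum>l\<in>L. f l m) \<in> A"
proof (induction L rule: finite_induct)
  case empty then show ?case using assms by (simp add: cl_def)
next
  case (insert x F)
  then have "(\<lambda>m. f x m + (\<Sum>l\<in>F. f l m)) \<in> A" using assms unfolding cl_def by auto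
  then show ?case using insert by simp
qed

lemma cl_mspan: "cl (mspan n k P)"
proof -
  have "(\<lambda>m. x m + y m) \<in> mspan n k P" if "x \<in> mspan n k P" "y \<in> mspan n k P" for x y
  proof -
    have "{m. x m + y m \<noteq> 0} \<subseteq> {m. x m \<noteq> 0} \<union> {m. y m \<noteq> 0}" by auto
    then have "finite {m. x m + y m \<noteq> 0}" using that unfolding mspan_def by (auto intro: finite_subset)
    moreover have "\<forall>\<alpha> \<sigma>. x (\<alpha>,\<sigma>) + y (\<alpha>,\<sigma>) \<noteq> 0 \<longrightarrow>
        \<sigma> \<subseteq> {..<n} \<and> card \<sigma> = k \<and> (\<forall>i\<ge>n. \<alpha> i = 0) \<and> P \<alpha> \<sigma>"
    proof (intro allI impI)
      fix \<alpha> \<sigma> assume "x (\<alpha>,\<sigma>) + y (\<alpha>,\<sigma>) \<noteq> 0"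
      then have "x (\<alpha>,\<sigma>) \<noteq> 0 \<or> y (\<alpha>,\<sigma>) \<noteq> 0" by auto
      moreover have "x (\<alpha>,\<sigma>) \<noteq> 0 \<Longrightarrow> \<sigma> \<subseteq> {..<n} \<and> card \<sigma> = k \<and> (\<forall>i\<ge>n. \<alpha> i = 0) \<and> P \<alpha> \<sigma>"
        using that(1) unfolding mspan_def by simp
      moreover have "y (\<alpha>,\<sigma>) \<noteq> 0 \<Longrightarrow> \<sigma> \<subseteq> {..<n} \<and> card \<sigma> = k \<and> (\<forall>i\<ge>n. \<alpha> i = 0) \<and> P \<alpha> \<sigma>"
        using that(2) unfolding mspan_def by simp
      ultimately show "\<sigma> \<subseteq> {..<n} \<and> card \<sigma> = k \<and> (\<forall>i\<ge>n. \<alpha> i = 0) \<and> P \<alpha> \<sigma>" by blast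
    qed
    ultimately show ?thesis unfolding mspan_def by simp
  qed
  moreover have "(\<lambda>_. 0) \<in> mspan n k P" unfolding mspan_def by simp
  ultimately show ?thesis unfolding cl_def by blast
qed

lemma mspan_mono: "(\<And>\<alpha> \<sigma>. P \<alpha> \<sigma> \<Longrightarrow> Q \<alpha> \<sigma>) \<Longrightarrow> x \<in> mspan n k P \<Longrightarrow> x \<in> mspan n k Q"
  unfolding mspan_def by blast

lemma mspan_scl: "x \<in> mspan n k P \<Longrightarrow> scl w x \<in> mspan n k P"
proof -
  assume x: "x \<in> mspan n k P"
  have "{m. w m * x m \<noteq> 0} \<subseteq> {m. x m \<noteq> 0}" by auto
  then have "finite {m. w m * x m \<noteq> 0}" using x unfolding mspan_def by (auto intro: finite_subset)
  moreover have "\<forall>\<alpha> \<sigma>. w (\<alpha>,\<sigma>) * x (\<alpha>,\<sigma>) \<noteq> 0 \<longrightarrow>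
        \<sigma> \<subseteq> {..<n} \<and> card \<sigma> = k \<and> (\<forall>i\<ge>n. \<alpha> i = 0) \<and> P \<alpha> \<sigma>"
  proof (intro allI impI)
    fix \<alpha> \<sigma> assume "w (\<alpha>,\<sigma>) * x (\<alpha>,\<sigma>) \<noteq> 0"
    then have "x (\<alpha>,\<sigma>) \<noteq> 0" by simp
    then show "\<sigma> \<subseteq> {..<n} \<and> card \<sigma> = k \<and> (\<forall>i\<ge>n. \<alpha> i = 0) \<and> P \<alpha> \<sigma>"
      using x unfolding mspan_def by simp
  qed
  ultimately show ?thesis unfolding mspan_def scl_def by simp
qed

lemma sum_nz: "sum f A \<noteq> (0::real) \<Longrightarrow> \<exists>a\<in>A. f a \<noteq> 0"
  using sum.neutral[of A f] by blast

lemma mspan_D: "c \<in> mspan n k P \<Longrightarrow> c (\<alpha>,\<sigma>) \<noteq> 0 \<Longrightarrow> \<sigma> \<subseteq> {..<n} \<and> card \<sigma> = k \<and> (\<forall>i\<ge>n. \<alpha> i = 0) \<and> P \<alpha> \<sigma>"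
  unfolding mspan_def by simp

lemma mspan_fin: "c \<in> mspan n k P \<Longrightarrow> finite {m. c m \<noteq> 0}"
  unfolding mspan_def by simp

lemma mspan_I: "finite {m. c m \<noteq> 0} \<Longrightarrow> (\<And>\<alpha> \<sigma>. c (\<alpha>,\<sigma>) \<noteq> 0 \<Longrightarrow> \<sigma> \<subseteq> {..<n} \<and> card \<sigma> = k \<and> (\<forall>i\<ge>n. \<alpha> i = 0) \<and> P \<alpha> \<sigma>)
  \<Longrightarrow> c \<in> mspan n k P"
  unfolding mspan_def by simp

lemma upd_zero: "\<forall>i\<ge>n. ((\<alpha>::mindex)(j:=v)) i = 0 \<Longrightarrow> j < n \<Longrightarrow> \<forall>i\<ge>n. \<alpha> i = 0"
proof (intro allI impI)
  fix i assume a: "\<forall>i\<ge>n. (\<alpha>(j:=v)) i = 0" "j < n" "n \<le> i"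
  have "i \<noteq> j" using a(2) a(3) by auto
  then show "\<alpha> i = 0" using a(1)[rule_format, OF a(3)] by simp
qed

lemma koszul_mspan:
  assumes c: "c \<in> mspan n (Suc k) (\<lambda>\<alpha> \<sigma>. D (mdeg n \<alpha>))"
  shows "koszul n c \<in> mspan n k (\<lambda>\<alpha> \<sigma>. D (mdeg n \<alpha> - 1))"
proof -
  have key: "\<exists>j. j < n \<and> j \<notin> \<tau> \<and> 1 \<le> \<beta> j \<and> c (\<beta>(j:=\<beta> j - 1), insert j \<tau>) \<noteq> 0"
    if nz: "koszul n c (\<beta>,\<tau>) \<noteq> 0" for \<beta> \<tau>
  proof -
    obtain j where "j \<in> Ib n \<beta> \<tau>" "sg \<tau> j * c (\<beta>(j:=\<beta> j - 1), insert j \<tau>) \<noteq> 0"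
      using sum_nz[OF nz[unfolded koszul_eq]] by blast
    then show ?thesis unfolding Ib_def by auto
  qed
  define g where "g = (\<lambda>(m::mindex \<times> nat set, j::nat). ((fst m)(j := fst m j + 1), snd m - {j}))"
  have sub: "{m. koszul n c m \<noteq> 0} \<subseteq> g ` ({m. c m \<noteq> 0} \<times> {..<n})"
  proof clarify
    fix \<beta> \<tau> assume "koszul n c (\<beta>,\<tau>) \<noteq> 0"
    then obtain j where j: "j < n" "j \<notin> \<tau>" "1 \<le> \<beta> j" "c (\<beta>(j:=\<beta> j - 1), insert j \<tau>) \<noteq> 0"
      using key by blast
    have e1: "\<beta>(j:=\<beta> j - 1, j := \<beta> j - 1 + 1) = \<beta>" using j(3) by auto
    have e2: "insert j \<tau> - {j} = \<tau>" using j(2) by auto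
    have eq: "g ((\<beta>(j:=\<beta> j - 1), insert j \<tau>), j) = (\<beta>,\<tau>)" unfolding g_def using e1 e2 by simp
    have mem: "((\<beta>(j:=\<beta> j - 1), insert j \<tau>), j) \<in> {m. c m \<noteq> 0} \<times> {..<n}" using j by simp
    show "(\<beta>,\<tau>) \<in> g ` ({m. c m \<noteq> 0} \<times> {..<n})" by (rule rev_image_eqI[of _ _ _ g, OF mem eq[symmetric]])
  qed
  have fc: "finite ({m. c m \<noteq> 0} \<times> {..<n})" using mspan_fin[OF c] by simp
  have fin: "finite {m. koszul n c m \<noteq> 0}" by (rule finite_subset[OF sub finite_imageI[OF fc]])
  show ?thesis
  proof (rule mspan_I[OF fin])
    fix \<alpha> \<sigma> assume nz: "koszul n c (\<alpha>,\<sigma>) \<noteq> 0"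
    obtain j where j: "j < n" "j \<notin> \<sigma>" "1 \<le> \<alpha> j" "c (\<alpha>(j:=\<alpha> j - 1), insert j \<sigma>) \<noteq> 0"
      using key[OF nz] by blast
    have P: "insert j \<sigma> \<subseteq> {..<n}" "card (insert j \<sigma>) = Suc k" "\<forall>i\<ge>n. (\<alpha>(j:=\<alpha> j - 1)) i = 0"
        "D (mdeg n (\<alpha>(j:=\<alpha> j - 1)))"
      using mspan_D[OF c j(4)] by blast+
    have fs: "finite \<sigma>" by (rule finite_subset[OF _ finite_lessThan[of n]]) (use P(1) in auto)
    have "card \<sigma> = k" using P(2) fs j(2) by simp
    moreover have "\<forall>i\<ge>n. \<alpha> i = 0" using upd_zero[OF P(3) j(1)] .
    moreover have "mdeg n (\<alpha>(j:=\<alpha> j - 1)) = mdeg n \<alpha> - 1" using mdeg_upd[OF j(1), of \<alpha> "\<alpha> j - 1"] j(3) by simp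
    moreover have "\<sigma> \<subseteq> {..<n}" using P(1) by simp
    ultimately show "\<sigma> \<subseteq> {..<n} \<and> card \<sigma> = k \<and> (\<forall>i\<ge>n. \<alpha> i = 0) \<and> D (mdeg n \<alpha> - 1)" using P(4) by simp
  qed
qed

lemma koszul_mspan0:
  assumes c: "c \<in> mspan n 0 P"
  shows "koszul n c = (\<lambda>_. 0)"
proof (rule ext, clarify)
  fix \<beta> \<tau>
  show "koszul n c (\<beta>,\<tau>) = 0" unfolding koszul_eq
  proof (rule sum.neutral, rule ballI)
    fix j assume j: "j \<in> Ib n \<beta> \<tau>"
    have "c (\<beta>(j:=\<beta> j - 1), insert j \<tau>) = 0"
    proof (rule ccontr)
      assume "c (\<beta>(j:=\<beta> j - 1), insert j \<tau>) \<noteq> 0"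
      then have a: "insert j \<tau> \<subseteq> {..<n}" "card (insert j \<tau>) = 0" using mspan_D[OF c] by blast+
      then have "finite (insert j \<tau>)" using finite_subset[OF a(1) finite_lessThan[of n]] by simp
      then show False using a(2) by simp
    qed
    then show "sg \<tau> j * c (\<beta>(j:=\<beta> j - 1), insert j \<tau>) = 0" by simp
  qed
qed

lemma extd_mspan:
  assumes c: "c \<in> mspan n k (\<lambda>\<alpha> \<sigma>. D (mdeg n \<alpha>))"
  shows "extd c \<in> mspan n (Suc k) (\<lambda>\<alpha> \<sigma>. D (mdeg n \<alpha> + 1))"
proof -
  have key: "finite \<tau> \<and> (\<exists>j. j < n \<and> j \<in> \<tau> \<and> c (\<beta>(j:=\<beta> j + 1), \<tau> - {j}) \<noteq> 0)"
    if nz: "extd c (\<beta>,\<tau>) \<noteq> 0" for \<beta> \<tau>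
  proof -
    have ft: "finite \<tau>"
    proof (rule ccontr)
      assume "infinite \<tau>"
      then have "extd c (\<beta>,\<tau>) = 0" by (simp add: extd_eq)
      then show False using nz by simp
    qed
    obtain j where j: "j \<in> \<tau>" "sg \<tau> j * real (\<beta> j + 1) * c (\<beta>(j:=\<beta> j + 1), \<tau> - {j}) \<noteq> 0"
      using sum_nz[OF nz[unfolded extd_eq]] by blast
    then have j2: "c (\<beta>(j:=\<beta> j + 1), \<tau> - {j}) \<noteq> 0" by simp
    then have "\<forall>i\<ge>n. (\<beta>(j:=\<beta> j + 1)) i = 0" using mspan_D[OF c] by blast
    then have "j < n" by (metis fun_upd_same not_le add_eq_0_iff_both_eq_0 one_neq_zero)
    then show ?thesis using ft j(1) j2 by blast
  qed
  define g where "g = (\<lambda>(m::mindex \<times> nat set, j::nat). ((fst m)(j := fst m j - 1), insert j (snd m)))"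
  have sub: "{m. extd c m \<noteq> 0} \<subseteq> g ` ({m. c m \<noteq> 0} \<times> {..<n})"
  proof clarify
    fix \<beta> \<tau> assume "extd c (\<beta>,\<tau>) \<noteq> 0"
    then obtain j where j: "j < n" "j \<in> \<tau>" "c (\<beta>(j:=\<beta> j + 1), \<tau> - {j}) \<noteq> 0"
      using key by blast
    have e1: "\<beta>(j:=\<beta> j + 1, j := \<beta> j + 1 - 1) = \<beta>" by auto
    have e2: "insert j (\<tau> - {j}) = \<tau>" using j(2) by auto
    have eq: "g ((\<beta>(j:=\<beta> j + 1), \<tau> - {j}), j) = (\<beta>,\<tau>)" unfolding g_def using e1 e2 by simp
    have mem: "((\<beta>(j:=\<beta> j + 1), \<tau> - {j}), j) \<in> {m. c m \<noteq> 0} \<times> {..<n}" using j by simp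
    show "(\<beta>,\<tau>) \<in> g ` ({m. c m \<noteq> 0} \<times> {..<n})" by (rule rev_image_eqI[of _ _ _ g, OF mem eq[symmetric]])
  qed
  have fc: "finite ({m. c m \<noteq> 0} \<times> {..<n})" using mspan_fin[OF c] by simp
  have fin: "finite {m. extd c m \<noteq> 0}" by (rule finite_subset[OF sub finite_imageI[OF fc]])
  show ?thesis
  proof (rule mspan_I[OF fin])
    fix \<alpha> \<sigma> assume nz: "extd c (\<alpha>,\<sigma>) \<noteq> 0"
    obtain j where j: "finite \<sigma>" "j < n" "j \<in> \<sigma>" "c (\<alpha>(j:=\<alpha> j + 1), \<sigma> - {j}) \<noteq> 0"
      using key[OF nz] by blast
    have P: "\<sigma> - {j} \<subseteq> {..<n}" "card (\<sigma> - {j}) = k" "\<forall>i\<ge>n. (\<alpha>(j:=\<alpha> j + 1)) i = 0"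
        "D (mdeg n (\<alpha>(j:=\<alpha> j + 1)))"
      using mspan_D[OF c j(4)] by blast+
    have "\<sigma> \<subseteq> {..<n}" using P(1) j by auto
    moreover have "card \<sigma> = Suc k" using P(2) j card_Suc_Diff1 by metis
    moreover have "\<forall>i\<ge>n. \<alpha> i = 0" using upd_zero[OF P(3) j(2)] .
    moreover have "mdeg n (\<alpha>(j:=\<alpha> j + 1)) = mdeg n \<alpha> + 1" using mdeg_upd[OF j(2), of \<alpha> "\<alpha> j + 1"] by simp
    ultimately show "\<sigma> \<subseteq> {..<n} \<and> card \<sigma> = Suc k \<and> (\<forall>i\<ge>n. \<alpha> i = 0) \<and> D (mdeg n \<alpha> + 1)" using P(4) by simp
  qed
qed

definition sinv :: "nat \<Rightarrow> pform set \<Rightarrow> bool" where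
  "sinv n A \<longleftrightarrow> (\<forall>\<phi> c. c \<in> A \<longrightarrow> scl (\<lambda>m. \<phi> (Nw n m)) c \<in> A)"

lemma scl_add: "scl w (\<lambda>m. x m + y m) = (\<lambda>m. scl w x m + scl w y m)"
  unfolding scl_def by (simp add: distrib_left)

lemma scl_sum: "scl w (\<lambda>m. \<Sum>l\<in>L. f l m) = (\<lambda>m. \<Sum>l\<in>L. scl w (f l) m)"
  unfolding scl_def by (simp add: sum_distrib_left)

lemma scl_zero: "scl w (\<lambda>_. 0) = (\<lambda>_. 0)"
  unfolding scl_def by simp

lemma cl_image:
  assumes "cl A" "g (\<lambda>_. 0) = (\<lambda>_. 0)" "\<And>x y. g (\<lambda>m. x m + y m) = (\<lambda>m. g x m + g y m)"
  shows "cl (g ` A)"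
proof -
  have "(\<lambda>m. g x m + g y m) \<in> g ` A" if "x \<in> A" "y \<in> A" for x y
  proof -
    have "(\<lambda>m. x m + y m) \<in> A" using assms(1) that unfolding cl_def by simp
    then show ?thesis by (rule rev_image_eqI) (rule assms(3)[symmetric])
  qed
  moreover have "(\<lambda>_. 0) \<in> g ` A"
  proof (rule rev_image_eqI)
    show "(\<lambda>_. 0) \<in> A" using assms(1) unfolding cl_def by simp
  qed (rule assms(2)[symmetric])
  ultimately show ?thesis unfolding cl_def by auto
qed

lemma cl_add: "cl A \<Longrightarrow> x \<in> A \<Longrightarrow> y \<in> A \<Longrightarrow> (\<lambda>m. x m + y m) \<in> A"
  unfolding cl_def by blast

lemma cl_zero: "cl A \<Longrightarrow> (\<lambda>_. 0) \<in> A"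
  unfolding cl_def by blast

lemma sinv_mspan: "sinv n (mspan n k P)"
  unfolding sinv_def by (simp add: mspan_scl)

lemma sinv_koszul: "sinv n A \<Longrightarrow> sinv n (koszul n ` A)"
  unfolding sinv_def
proof (intro allI impI)
  fix \<phi> c assume A: "\<forall>\<phi> c. c \<in> A \<longrightarrow> scl (\<lambda>m. \<phi> (Nw n m)) c \<in> A" and c: "c \<in> koszul n ` A"
  then obtain x where x: "x \<in> A" "c = koszul n x" by blast
  have "scl (\<lambda>m. \<phi> (Nw n m)) x \<in> A" using A x(1) by simp
  then show "scl (\<lambda>m. \<phi> (Nw n m)) c \<in> koszul n ` A"
    by (rule rev_image_eqI) (simp add: x(2) koszul_scl)
qed

lemma sinv_extd: "sinv n A \<Longrightarrow> sinv n (extd ` A)"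
  unfolding sinv_def
proof (intro allI impI)
  fix \<phi> c assume A: "\<forall>\<phi> c. c \<in> A \<longrightarrow> scl (\<lambda>m. \<phi> (Nw n m)) c \<in> A" and c: "c \<in> extd ` A"
  then obtain x where x: "x \<in> A" "c = extd x" by blast
  have "scl (\<lambda>m. \<phi> (Nw n m)) x \<in> A" using A x(1) by simp
  then show "scl (\<lambda>m. \<phi> (Nw n m)) c \<in> extd ` A"
    by (rule rev_image_eqI) (simp add: x(2) extd_scl)
qed

lemma sumsp_E: "c \<in> sumsp V I \<Longrightarrow> \<exists>L f. finite L \<and> L \<subseteq> I \<and> (\<forall>l\<in>L. f l \<in> V l) \<and> c = (\<lambda>m. \<Sum>l\<in>L. f l m)"
  unfolding sumsp_def by simp

lemma sumsp_I: "finite L \<Longrightarrow> L \<subseteq> I \<Longrightarrow> (\<And>l. l\<in>L \<Longrightarrow> f l \<in> V l) \<Longrightarrow> c = (\<lambda>m. \<Sum>l\<in>L. f l m) \<Longrightarrow> c \<in> sumsp V I"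
  unfolding sumsp_def by (intro CollectI exI[of _ L] exI[of _ f]) auto

lemma cl_sumsp:
  assumes V: "\<And>l. l \<in> I \<Longrightarrow> cl (V l)"
  shows "cl (sumsp V I)"
proof -
  have z: "(\<lambda>_. 0) \<in> sumsp V I" by (rule sumsp_I[of "{}" I "\<lambda>_ _. 0"]) auto
  have "(\<lambda>m. x m + y m) \<in> sumsp V I" if x: "x \<in> sumsp V I" and y: "y \<in> sumsp V I" for x y
  proof -
    obtain L1 f1 where 1: "finite L1" "L1 \<subseteq> I" "\<forall>l\<in>L1. f1 l \<in> V l" "x = (\<lambda>m. \<Sum>l\<in>L1. f1 l m)"
      using sumsp_E[OF x] by (elim exE conjE) (rule that, assumption+)
    obtain L2 f2 where 2: "finite L2" "L2 \<subseteq> I" "\<forall>l\<in>L2. f2 l \<in> V l" "y = (\<lambda>m. \<Sum>l\<in>L2. f2 l m)"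
      using sumsp_E[OF y] by (elim exE conjE) (rule that, assumption+)
    define f where "f l = (if l \<in> L1 \<and> l \<in> L2 then (\<lambda>m. f1 l m + f2 l m) else if l \<in> L1 then f1 l else f2 l)" for l
    have fe: "f l m = (if l \<in> L1 then f1 l m else 0) + (if l \<in> L2 then f2 l m else 0)" if "l \<in> L1 \<union> L2" for l m
      using that unfolding f_def by auto
    show ?thesis
    proof (rule sumsp_I[of "L1 \<union> L2" _ f])
      show "finite (L1 \<union> L2)" using 1 2 by simp
      show "L1 \<union> L2 \<subseteq> I" using 1 2 by simp
      fix l assume l: "l \<in> L1 \<union> L2"
      then have "l \<in> I" using 1(2) 2(2) by blast
      then have cl: "cl (V l)" by (rule V)
      show "f l \<in> V l"
      proof (cases "l \<in> L1 \<and> l \<in> L2")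
        case True
        then have "f1 l \<in> V l" "f2 l \<in> V l" using 1(3) 2(3) by auto
        then have "(\<lambda>m. f1 l m + f2 l m) \<in> V l" using cl unfolding cl_def by simp
        then show ?thesis using True unfolding f_def by simp
      next
        case False
        show ?thesis
        proof (cases "l \<in> L1")
          case True then show ?thesis using False 1(3) unfolding f_def by simp
        next
          case F2: False then have "l \<in> L2" using l by simp
          then show ?thesis using F2 2(3) unfolding f_def by simp
        qed
      qed
    next
      show "(\<lambda>m. x m + y m) = (\<lambda>m. \<Sum>l\<in>L1 \<union> L2. f l m)"
      proof
        fix m
        have "(\<Sum>l\<in>L1 \<union> L2. f l m) = (\<Sum>l\<in>L1 \<union> L2. (if l \<in> L1 then f1 l m else 0)) + (\<Sum>l\<in>L1 \<union> L2. (if l \<in> L2 then f2 l m else 0))"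
          unfolding sum.distrib[symmetric] by (rule sum.cong[OF refl]) (rule fe)
        also have "\<dots> = (\<Sum>l\<in>(L1 \<union> L2) \<inter> L1. f1 l m) + (\<Sum>l\<in>(L1 \<union> L2) \<inter> L2. f2 l m)"
          using 1 2 by (simp only: sum.inter_restrict finite_Un)
        also have "\<dots> = x m + y m" using 1 2 by (simp add: Int_absorb1)
        finally show "x m + y m = (\<Sum>l\<in>L1 \<union> L2. f l m)" by simp
      qed
    qed
  qed
  then show ?thesis using z unfolding cl_def by simp
qed

lemma sumsp_sub:
  assumes "\<And>l. l \<in> I \<Longrightarrow> V l \<subseteq> A" "cl A"
  shows "sumsp V I \<subseteq> A"
proof
  fix c assume "c \<in> sumsp V I"
  from sumsp_E[OF this] obtain L f where L: "finite L" "L \<subseteq> I" "\<forall>l\<in>L. f l \<in> V l" "c = (\<lambda>m. \<Sum>l\<in>L. f l m)"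
    by (elim exE conjE) (rule that, assumption+)
  have "\<forall>l\<in>L. f l \<in> A" using L(2,3) assms(1) by (meson subsetD)
  then show "c \<in> A" using cl_sum[OF assms(2) L(1)] L(4) by simp
qed

lemma sinv_sumsp:
  assumes V: "\<And>l. l \<in> I \<Longrightarrow> sinv n (V l)"
  shows "sinv n (sumsp V I)"
  unfolding sinv_def
proof (intro allI impI)
  fix \<phi> c assume "c \<in> sumsp V I"
  from sumsp_E[OF this] obtain L f where L: "finite L" "L \<subseteq> I" "\<forall>l\<in>L. f l \<in> V l" "c = (\<lambda>m. \<Sum>l\<in>L. f l m)"
    by (elim exE conjE) (rule that, assumption+)
  show "scl (\<lambda>m. \<phi> (Nw n m)) c \<in> sumsp V I"
  proof (rule sumsp_I[OF L(1) L(2)])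
    fix l assume "l \<in> L"
    then have "f l \<in> V l" "sinv n (V l)" using L(2,3) V by auto
    then show "scl (\<lambda>m. \<phi> (Nw n m)) (f l) \<in> V l" unfolding sinv_def by simp
  qed (simp add: L(4) scl_sum)
qed

lemma cl_koszul_img: "cl A \<Longrightarrow> cl (koszul n ` A)"
  by (rule cl_image) (auto simp: koszul_zero koszul_add)

lemma cl_extd_img: "cl A \<Longrightarrow> cl (extd ` A)"
  by (rule cl_image) (auto simp: extd_zero extd_add)

lemma cl_Jsp: "cl (Jsp n r k)"
  unfolding Jsp_def Hlsp_def by (rule cl_sumsp, rule cl_koszul_img, rule cl_mspan)

lemma sinv_Jsp: "sinv n (Jsp n r k)"
  unfolding Jsp_def Hlsp_def by (rule sinv_sumsp, rule sinv_koszul, rule sinv_mspan)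

lemma Ssp_E: "c \<in> Ssp n r k \<Longrightarrow> \<exists>a b e. c = (\<lambda>m. a m + b m + e m) \<and> a \<in> Psp n r k \<and> b \<in> Jsp n r k \<and>
      e \<in> (if k = 0 then {(\<lambda>_. 0)} else extd ` Jsp n (r + 1) (k - 1))"
  unfolding Ssp_def by blast

lemma Ssp_I: "a \<in> Psp n r k \<Longrightarrow> b \<in> Jsp n r k \<Longrightarrow> e \<in> (if k = 0 then {(\<lambda>_. 0)} else extd ` Jsp n (r + 1) (k - 1))
   \<Longrightarrow> c = (\<lambda>m. a m + b m + e m) \<Longrightarrow> c \<in> Ssp n r k"
  unfolding Ssp_def by blast

lemma Smsp_E: "c \<in> Smsp n r k \<Longrightarrow> \<exists>a b. c = (\<lambda>m. a m + koszul n b m) \<and> a \<in> Ssp n (r - 1) k \<and> b \<in> Ssp n (r - 1) (k + 1)"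
  unfolding Smsp_def by blast

lemma Smsp_I: "a \<in> Ssp n (r - 1) k \<Longrightarrow> b \<in> Ssp n (r - 1) (k + 1) \<Longrightarrow> c = (\<lambda>m. a m + koszul n b m) \<Longrightarrow> c \<in> Smsp n r k"
  unfolding Smsp_def by blast

lemma cl_E: "cl (if k = 0 then {(\<lambda>_. 0)} else extd ` Jsp n (r + 1) (k - 1))"
  using cl_extd_img[OF cl_Jsp] by (simp add: cl_def)

lemma sinv_E: "sinv n (if k = 0 then {(\<lambda>_. 0)} else extd ` Jsp n (r + 1) (k - 1))"
  using sinv_extd[OF sinv_Jsp] by (simp add: sinv_def scl_zero)

lemma cl_Ssp: "cl (Ssp n r k)"
proof -
  have P: "cl (Psp n r k)" unfolding Psp_def by (rule cl_mspan)
  have "(\<lambda>m. x m + y m) \<in> Ssp n r k" if x: "x \<in> Ssp n r k" and y: "y \<in> Ssp n r k" for x y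
  proof -
    obtain a1 b1 e1 where 1: "x = (\<lambda>m. a1 m + b1 m + e1 m)" "a1 \<in> Psp n r k" "b1 \<in> Jsp n r k"
      "e1 \<in> (if k = 0 then {(\<lambda>_. 0)} else extd ` Jsp n (r + 1) (k - 1))" using Ssp_E[OF x] by (elim exE conjE) (rule that, assumption+)
    obtain a2 b2 e2 where 2: "y = (\<lambda>m. a2 m + b2 m + e2 m)" "a2 \<in> Psp n r k" "b2 \<in> Jsp n r k"
      "e2 \<in> (if k = 0 then {(\<lambda>_. 0)} else extd ` Jsp n (r + 1) (k - 1))" using Ssp_E[OF y] by (elim exE conjE) (rule that, assumption+)
    show ?thesis
    proof (rule Ssp_I)
      show "(\<lambda>m. a1 m + a2 m) \<in> Psp n r k" using P 1 2 unfolding cl_def by blast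
      show "(\<lambda>m. b1 m + b2 m) \<in> Jsp n r k" using cl_Jsp 1 2 unfolding cl_def by blast
      show "(\<lambda>m. e1 m + e2 m) \<in> (if k = 0 then {(\<lambda>_. 0)} else extd ` Jsp n (r + 1) (k - 1))"
        using cl_E[of k n r] 1 2 unfolding cl_def by blast
      show "(\<lambda>m. x m + y m) = (\<lambda>m. (a1 m + a2 m) + (b1 m + b2 m) + (e1 m + e2 m))" using 1 2 by auto
    qed
  qed
  moreover have "(\<lambda>_. 0) \<in> Ssp n r k"
    by (rule Ssp_I[of "\<lambda>_. 0" _ _ _ "\<lambda>_. 0" "\<lambda>_. 0"])
       (use P cl_Jsp cl_E in \<open>auto simp: cl_def\<close>)
  ultimately show ?thesis unfolding cl_def by blast
qed

lemma sinv_Ssp: "sinv n (Ssp n r k)"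
  unfolding sinv_def
proof (intro allI impI)
  fix \<phi> :: "nat \<Rightarrow> real" and c assume "c \<in> Ssp n r k"
  from Ssp_E[OF this] obtain a b e where 1: "c = (\<lambda>m. a m + b m + e m)" "a \<in> Psp n r k" "b \<in> Jsp n r k"
      "e \<in> (if k = 0 then {(\<lambda>_. 0)} else extd ` Jsp n (r + 1) (k - 1))" by (elim exE conjE) (rule that, assumption+)
  let ?w = "\<lambda>m. \<phi> (Nw n m)"
  show "scl ?w c \<in> Ssp n r k"
  proof (rule Ssp_I)
    show "scl ?w a \<in> Psp n r k" using 1 mspan_scl unfolding Psp_def by blast
    show "scl ?w b \<in> Jsp n r k" using 1 sinv_Jsp unfolding sinv_def by blast
    show "scl ?w e \<in> (if k = 0 then {(\<lambda>_. 0)} else extd ` Jsp n (r + 1) (k - 1))"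
      using 1 sinv_E[of n k r] unfolding sinv_def by blast
    show "scl ?w c = (\<lambda>m. scl ?w a m + scl ?w b m + scl ?w e m)" unfolding 1 scl_def by (simp add: algebra_simps)
  qed
qed

lemma sinv_Smsp: "sinv n (Smsp n r k)"
  unfolding sinv_def
proof (intro allI impI)
  fix \<phi> :: "nat \<Rightarrow> real" and c assume "c \<in> Smsp n r k"
  from Smsp_E[OF this] obtain a b where 1: "c = (\<lambda>m. a m + koszul n b m)" "a \<in> Ssp n (r - 1) k" "b \<in> Ssp n (r - 1) (k + 1)"
    by (elim exE conjE) (rule that, assumption+)
  let ?w = "\<lambda>m. \<phi> (Nw n m)"
  show "scl ?w c \<in> Smsp n r k"
  proof (rule Smsp_I)
    show "scl ?w a \<in> Ssp n (r - 1) k" using 1 sinv_Ssp unfolding sinv_def by blast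
    show "scl ?w b \<in> Ssp n (r - 1) (k + 1)" using 1 sinv_Ssp unfolding sinv_def by blast
    show "scl ?w c = (\<lambda>m. scl ?w a m + koszul n (scl ?w b) m)"
      unfolding 1 koszul_scl by (simp add: scl_def algebra_simps)
  qed
qed

lemma Ssp_Hall: "Ssp n r k \<subseteq> mspan n k (\<lambda>_ _. True)"
proof
  fix c assume "c \<in> Ssp n r k"
  from Ssp_E[OF this] obtain a b e where 1: "c = (\<lambda>m. a m + b m + e m)" "a \<in> Psp n r k" "b \<in> Jsp n r k"
      "e \<in> (if k = 0 then {(\<lambda>_. 0)} else extd ` Jsp n (r + 1) (k - 1))" by (elim exE conjE) (rule that, assumption+)
  have J: "Jsp n r' k' \<subseteq> mspan n k' (\<lambda>_ _. True)" for r' k'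
    unfolding Jsp_def
  proof (rule sumsp_sub[OF _ cl_mspan])
    fix l
    show "koszul n ` Hlsp n (r' + l - 1) l (k' + 1) \<subseteq> mspan n k' (\<lambda>_ _. True)"
    proof clarify
      fix h assume h: "h \<in> Hlsp n (r' + l - 1) l (k' + 1)"
      have "h \<in> mspan n (k' + 1) (\<lambda>\<alpha> \<sigma>. True)" 
        by (rule mspan_mono[of _ "\<lambda>_ _. True", OF _ h[unfolded Hlsp_def]]) simp
      then have "h \<in> mspan n (Suc k') (\<lambda>\<alpha> \<sigma>. (\<lambda>_. True) (mdeg n \<alpha>))" by simp
      from koszul_mspan[OF this] show "koszul n h \<in> mspan n k' (\<lambda>_ _. True)" by simp
    qed
  qed
  have a: "a \<in> mspan n k (\<lambda>_ _. True)" using 1(2) unfolding Psp_def by (rule mspan_mono[rotated]) simp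
  have b: "b \<in> mspan n k (\<lambda>_ _. True)" using 1(3) J by blast
  have e: "e \<in> mspan n k (\<lambda>_ _. True)"
  proof (cases "k = 0")
    case True then show ?thesis using 1(4) cl_mspan[of n k "\<lambda>_ _. True"] by (simp add: cl_def)
  next
    case False
    then obtain j where j: "j \<in> Jsp n (r+1) (k - 1)" "e = extd j" using 1(4) by auto
    have "j \<in> mspan n (k - 1) (\<lambda>\<alpha> \<sigma>. (\<lambda>_. True) (mdeg n \<alpha>))" using j(1) J by auto
    from extd_mspan[OF this] show ?thesis using j(2) False by simp
  qed
  have "(\<lambda>m. a m + b m) \<in> mspan n k (\<lambda>_ _. True)" using cl_add[OF cl_mspan a b] .
  from cl_add[OF cl_mspan this e] show "c \<in> mspan n k (\<lambda>_ _. True)" unfolding 1(1) by simp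
qed

lemma Smsp_Hall: "Smsp n r k \<subseteq> mspan n k (\<lambda>_ _. True)"
proof
  fix c assume "c \<in> Smsp n r k"
  from Smsp_E[OF this] obtain a b where 1: "c = (\<lambda>m. a m + koszul n b m)" "a \<in> Ssp n (r - 1) k" "b \<in> Ssp n (r - 1) (k + 1)"
    by (elim exE conjE) (rule that, assumption+)
  have a: "a \<in> mspan n k (\<lambda>_ _. True)" using 1(2) Ssp_Hall by blast
  have "b \<in> mspan n (Suc k) (\<lambda>\<alpha> \<sigma>. (\<lambda>_. True) (mdeg n \<alpha>))" using 1(3) Ssp_Hall by auto
  from koszul_mspan[OF this] have b: "koszul n b \<in> mspan n k (\<lambda>_ _. True)" by simp
  from cl_add[OF cl_mspan a b] show "c \<in> mspan n k (\<lambda>_ _. True)" unfolding 1(1) by simp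
qed

lemma extd_Psp: "a \<in> Psp n q k \<Longrightarrow> extd a \<in> Psp n q (Suc k)"
proof -
  assume a: "a \<in> Psp n q k"
  have "a \<in> mspan n k (\<lambda>\<alpha> \<sigma>. (\<lambda>d. d \<le> q) (mdeg n \<alpha>))" using a unfolding Psp_def by simp
  from extd_mspan[OF this] have "extd a \<in> mspan n (Suc k) (\<lambda>\<alpha> \<sigma>. mdeg n \<alpha> + 1 \<le> q)" by simp
  then show ?thesis unfolding Psp_def by (rule mspan_mono[rotated]) simp
qed

lemma extd_koszul_H: "h \<in> Hlsp n q l (Suc k) \<Longrightarrow> extd (koszul n h) \<in> Psp n q (Suc k)"
proof -
  assume h: "h \<in> Hlsp n q l (Suc k)"
  have "h \<in> mspan n (Suc k) (\<lambda>\<alpha> \<sigma>. mdeg n \<alpha> = q)"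
    by (rule mspan_mono[OF _ h[unfolded Hlsp_def]]) simp
  then have "h \<in> mspan n (Suc k) (\<lambda>\<alpha> \<sigma>. (\<lambda>d. d = q) (mdeg n \<alpha>))" by simp
  from koszul_mspan[OF this] have "koszul n h \<in> mspan n k (\<lambda>\<alpha> \<sigma>. (\<lambda>d. d - 1 = q) (mdeg n \<alpha>))" by simp
  from extd_mspan[OF this] have "extd (koszul n h) \<in> mspan n (Suc k) (\<lambda>\<alpha> \<sigma>. mdeg n \<alpha> + 1 - 1 = q)" by simp
  then show ?thesis unfolding Psp_def by (rule mspan_mono[rotated]) simp
qed

lemma dS: assumes c: "c \<in> Ssp n q k" shows "extd c \<in> Ssp n q (Suc k)"
proof -
  from Ssp_E[OF c] obtain a b e where 1: "c = (\<lambda>m. a m + b m + e m)" "a \<in> Psp n q k" "b \<in> Jsp n q k"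
      "e \<in> (if k = 0 then {(\<lambda>_. 0)} else extd ` Jsp n (q + 1) (k - 1))"
    by (elim exE conjE) (rule that, assumption+)
  have ee: "extd e = (\<lambda>_. 0)"
  proof (cases "k = 0")
    case True then show ?thesis using 1(4) by (simp add: extd_zero)
  next
    case False then obtain j where "e = extd j" using 1(4) by auto
    then show ?thesis by (simp add: extd_extd)
  qed
  from sumsp_E[OF 1(3)[unfolded Jsp_def]] obtain L f where L: "finite L" "L \<subseteq> {1..}"
    "\<forall>l\<in>L. f l \<in> koszul n ` Hlsp n (q + l - 1) l (k + 1)" "b = (\<lambda>m. \<Sum>l\<in>L. f l m)"
    by (elim exE conjE) (rule that, assumption+)
  have "\<forall>l\<in>L. \<exists>h. h \<in> Hlsp n (q + l - 1) l (k + 1) \<and> f l = koszul n h" using L(3) by blast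
  then obtain h where h: "\<forall>l\<in>L. h l \<in> Hlsp n (q + l - 1) l (k + 1) \<and> f l = koszul n (h l)"
    by (metis bchoice)
  define p where "p = (if 1 \<in> L then extd (f 1) else (\<lambda>_. 0))"
  have pP: "p \<in> Psp n q (Suc k)"
  proof (cases "1 \<in> L")
    case True
    then have "h 1 \<in> Hlsp n q 1 (Suc k)" "f 1 = koszul n (h 1)" using h by auto
    then show ?thesis unfolding p_def using True extd_koszul_H by simp
  next
    case False then show ?thesis unfolding p_def Psp_def using cl_zero[OF cl_mspan] by simp
  qed
  define s where "s = (\<lambda>m. \<Sum>l\<in>L-{1}. f l m)"
  have sJ: "s \<in> Jsp n (q + 1) k"
    unfolding Jsp_def
  proof (rule sumsp_I[of "(\<lambda>l. l - 1) ` (L - {1})" _ "\<lambda>l'. f (l' + 1)"])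
    show "finite ((\<lambda>l. l - 1) ` (L - {1}))" using L(1) by simp
    show "(\<lambda>l. l - 1) ` (L - {1}) \<subseteq> {1..}" using L(2) by auto
  next
    fix l' assume "l' \<in> (\<lambda>l. l - 1) ` (L - {1})"
    then obtain l where l: "l \<in> L" "l \<noteq> 1" "l' = l - 1" by auto
    then have l2: "l \<ge> 2" using L(2) by force
    then have ll: "l' + 1 = l" using l by simp
    have hl: "h l \<in> Hlsp n (q + l - 1) l (k + 1)" "f l = koszul n (h l)" using h l by auto
    have "h l \<in> Hlsp n (q + 1 + l' - 1) l' (k + 1)"
      using hl(1) unfolding Hlsp_def
      by (rule mspan_mono[rotated]) (use l2 ll in auto)
    then show "f (l' + 1) \<in> koszul n ` Hlsp n (q + 1 + l' - 1) l' (k + 1)" using hl(2) ll by simp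
  next
    have inj: "inj_on (\<lambda>l. l - 1) (L - {1})"
    proof (rule inj_onI)
      fix x y assume "x \<in> L - {1}" "y \<in> L - {1}" "x - 1 = y - 1"
      moreover have "x \<ge> 1" "y \<ge> 1" using L(2) \<open>x \<in> L - {1}\<close> \<open>y \<in> L - {1}\<close> by auto
      ultimately show "x = y" by simp
    qed
    show "s = (\<lambda>m. \<Sum>l'\<in>(\<lambda>l. l - 1) ` (L - {1}). f (l' + 1) m)"
    proof
      fix m
      have "(\<Sum>l'\<in>(\<lambda>l. l - 1) ` (L - {1}). f (l' + 1) m) = (\<Sum>l\<in>L - {1}. f (l - 1 + 1) m)"
        by (subst sum.reindex[OF inj]) simp
      also have "\<dots> = (\<Sum>l\<in>L - {1}. f l m)"
      proof (rule sum.cong[OF refl])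
        fix l assume "l \<in> L - {1}"
        then have "l \<ge> 1" using L(2) by auto
        then show "f (l - 1 + 1) m = f l m" by simp
      qed
      finally show "s m = (\<Sum>l'\<in>(\<lambda>l. l - 1) ` (L - {1}). f (l' + 1) m)" unfolding s_def by simp
    qed
  qed
  have eb: "extd b m = p m + extd s m" for m
  proof -
    have "extd b m = (\<Sum>l\<in>L. extd (f l) m)" unfolding L(4) extd_sum[OF L(1)] ..
    also have "\<dots> = p m + (\<Sum>l\<in>L - {1}. extd (f l) m)"
    proof (cases "1 \<in> L")
      case True then show ?thesis unfolding p_def using L(1) by (simp add: sum.remove)
    next
      case False then show ?thesis unfolding p_def by simp
    qed
    also have "(\<Sum>l\<in>L - {1}. extd (f l) m) = extd s m" unfolding s_def using L(1) by (simp add: extd_sum)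
    finally show ?thesis .
  qed
  show ?thesis
  proof (rule Ssp_I[of "\<lambda>m. extd a m + p m" _ _ _ "\<lambda>_. 0" "extd s"])
    show "(\<lambda>m. extd a m + p m) \<in> Psp n q (Suc k)"
      using cl_add[OF _ extd_Psp[OF 1(2)] pP] unfolding Psp_def by (simp add: cl_mspan)
    show "(\<lambda>_. 0) \<in> Jsp n q (Suc k)" by (rule cl_zero[OF cl_Jsp])
    show "extd s \<in> (if Suc k = 0 then {\<lambda>_. 0} else extd ` Jsp n (q + 1) (Suc k - 1))" using sJ by simp
    show "extd c = (\<lambda>m. extd a m + p m + 0 + extd s m)"
      unfolding 1(1) extd_add ee using eb by (simp add: algebra_simps)
  qed
qed

lemma sinv_app: "sinv n A \<Longrightarrow> c \<in> A \<Longrightarrow> scl (\<lambda>m. \<phi> (Nw n m)) c \<in> A"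
  unfolding sinv_def by blast

lemma part2: assumes c: "c \<in> Smsp n r k" shows "extd c \<in> Smsp n r (k + 1)"
proof -
  from Smsp_E[OF c] obtain a b where 1: "c = (\<lambda>m. a m + koszul n b m)" "a \<in> Ssp n (r - 1) k" "b \<in> Ssp n (r - 1) (k + 1)"
    by (elim exE conjE) (rule that, assumption+)
  let ?N = "scl (\<lambda>m. (\<lambda>x. real x) (Nw n m)) b"
  let ?b' = "scl (\<lambda>m. (\<lambda>_. -1::real) (Nw n m)) (extd b)"
  have bN: "?N \<in> Ssp n (r - 1) (k + 1)" using sinv_app[OF sinv_Ssp 1(3), of "\<lambda>x. real x"] by simp
  have da: "extd a \<in> Ssp n (r - 1) (k + 1)" using dS[OF 1(2)] by simp
  have a': "(\<lambda>m. extd a m + ?N m) \<in> Ssp n (r - 1) (k + 1)" by (rule cl_add[OF cl_Ssp da bN])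
  have db: "extd b \<in> Ssp n (r - 1) (k + 1 + 1)" using dS[OF 1(3)] by simp
  have b': "?b' \<in> Ssp n (r - 1) (k + 1 + 1)" using sinv_app[OF sinv_Ssp db, of "\<lambda>_. -1"] by simp
  show ?thesis
  proof (rule Smsp_I[OF a' b'])
    show "extd c = (\<lambda>m. extd a m + ?N m + koszul n ?b' m)"
    proof
      fix m
      have h: "extd (koszul n b) m + koszul n (extd b) m = real (Nw n m) * b m" by (rule homotopy_all)
      have k: "koszul n ?b' m = - koszul n (extd b) m"
        using fun_cong[OF koszul_scl[of n "\<lambda>_. -1" "extd b"], of m] by (simp add: scl_def)
      show "extd c m = extd a m + ?N m + koszul n ?b' m"
        unfolding 1(1) extd_add k using h by (simp add: scl_def algebra_simps)
    qed
  qed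
qed

lemma constf_Smsp: "constf a \<in> Smsp n r 0"
proof (rule Smsp_I[where a="constf a" and b="\<lambda>_. 0"])
  show "constf a \<in> Ssp n (r - 1) 0"
  proof (rule Ssp_I[where a="constf a" and b="\<lambda>_. 0" and e="\<lambda>_. 0"])
    show "constf a \<in> Psp n (r - 1) 0"
      unfolding Psp_def
    proof (rule mspan_I)
      have "{m. constf a m \<noteq> 0} \<subseteq> {((\<lambda>_. 0), {})}"
      proof clarify
        fix \<alpha> \<sigma> assume "constf a (\<alpha>,\<sigma>) \<noteq> 0"
        then have "(if \<alpha> = (\<lambda>_. 0) \<and> \<sigma> = {} then a else 0) \<noteq> 0" unfolding constf_def by simp
        then show "\<alpha> = (\<lambda>_. 0) \<and> \<sigma> = {}" by (auto split: if_splits)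
      qed
      then show "finite {m. constf a m \<noteq> 0}" by (rule finite_subset) simp
    next
      fix \<alpha> \<sigma> assume "constf a (\<alpha>,\<sigma>) \<noteq> 0"
      then have "(if \<alpha> = (\<lambda>_. 0) \<and> \<sigma> = {} then a else 0) \<noteq> 0" unfolding constf_def by simp
      then have "\<alpha> = (\<lambda>_. 0)" "\<sigma> = {}" by (auto split: if_splits)
      then show "\<sigma> \<subseteq> {..<n} \<and> card \<sigma> = 0 \<and> (\<forall>i\<ge>n. \<alpha> i = 0) \<and> mdeg n \<alpha> \<le> r - 1"
        by (simp add: mdeg_def)
    qed
    show "(\<lambda>_. 0) \<in> Jsp n (r - 1) 0" by (rule cl_zero[OF cl_Jsp])
  qed simp_all
  show "(\<lambda>_. 0) \<in> Ssp n (r - 1) (0 + 1)" by (rule cl_zero[OF cl_Ssp])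
qed (simp add: koszul_zero)

lemma extd_constf: "extd (constf a) = (\<lambda>_. 0)"
proof (rule ext, clarify)
  fix \<beta> \<tau>
  show "extd (constf a) (\<beta>,\<tau>) = 0" unfolding extd_eq
  proof (rule sum.neutral, rule ballI)
    fix j assume "j \<in> \<tau>"
    have "\<beta>(j := \<beta> j + 1) \<noteq> (\<lambda>_. 0)"
    proof
      assume "\<beta>(j := \<beta> j + 1) = (\<lambda>_. 0)"
      then have "(\<beta>(j := \<beta> j + 1)) j = 0" by simp
      then show False by simp
    qed
    then show "sg \<tau> j * real (\<beta> j + 1) * constf a (\<beta>(j := \<beta> j + 1), \<tau> - {j}) = 0"
      unfolding constf_def by simp
  qed
qed

lemma part3: "{c \<in> Smsp n r 0. extd c = (\<lambda>_. 0)} = range constf"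
proof
  show "range constf \<subseteq> {c \<in> Smsp n r 0. extd c = (\<lambda>_. 0)}"
    using constf_Smsp extd_constf by auto
  show "{c \<in> Smsp n r 0. extd c = (\<lambda>_. 0)} \<subseteq> range constf"
  proof clarify
    fix c assume c: "c \<in> Smsp n r 0" and dc: "extd c = (\<lambda>_. 0)"
    have cH: "c \<in> mspan n 0 (\<lambda>_ _. True)" using c Smsp_Hall by blast
    have kc: "koszul n c = (\<lambda>_. 0)" by (rule koszul_mspan0[OF cH])
    have z: "real (Nw n m) * c m = 0" for m
      using homotopy_all[of n c m] unfolding kc dc extd_zero koszul_zero by simp
    have "c = constf (c ((\<lambda>_. 0), {}))"
    proof (rule ext, clarify)
      fix \<alpha> \<sigma>
      show "c (\<alpha>,\<sigma>) = constf (c ((\<lambda>_. 0), {})) (\<alpha>,\<sigma>)"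
      proof (cases "\<alpha> = (\<lambda>_. 0) \<and> \<sigma> = {}")
        case True then show ?thesis unfolding constf_def by auto
      next
        case False
        have "c (\<alpha>,\<sigma>) = 0"
        proof (rule ccontr)
          assume nz: "c (\<alpha>,\<sigma>) \<noteq> 0"
          then have P: "\<sigma> \<subseteq> {..<n}" "card \<sigma> = 0" "\<forall>i\<ge>n. \<alpha> i = 0" using mspan_D[OF cH nz] by auto
          have fs: "finite \<sigma>" using finite_subset[OF P(1)] by simp
          then have s: "\<sigma> = {}" using P(2) by simp
          have "real (Nw n (\<alpha>,\<sigma>)) = 0" using z[of "(\<alpha>,\<sigma>)"] nz by simp
          then have "mdeg n \<alpha> = 0" unfolding Nw_def s by simp
          then have "\<forall>i<n. \<alpha> i = 0" unfolding mdeg_def by simp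
          then have "\<alpha> = (\<lambda>_. 0)" using P(3) by (metis not_le ext)
          then show False using False s by simp
        qed
        then show ?thesis using False unfolding constf_def by auto
      qed
    qed
    then show "c \<in> range constf" by blast
  qed
qed

lemma part4: assumes k: "k \<ge> 1"
  shows "{c \<in> Smsp n r k. extd c = (\<lambda>_. 0)} = extd ` Smsp n r (k - 1)"
proof
  show "extd ` Smsp n r (k - 1) \<subseteq> {c \<in> Smsp n r k. extd c = (\<lambda>_. 0)}"
  proof clarify
    fix c assume "c \<in> Smsp n r (k - 1)"
    from part2[OF this] have "extd c \<in> Smsp n r k" using k by simp
    then show "extd c \<in> Smsp n r k \<and> extd (extd c) = (\<lambda>_. 0)" by (simp add: extd_extd)
  qed
  show "{c \<in> Smsp n r k. extd c = (\<lambda>_. 0)} \<subseteq> extd ` Smsp n r (k - 1)"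
  proof clarify
    fix c assume c: "c \<in> Smsp n r k" and dc: "extd c = (\<lambda>_. 0)"
    define w where "w = (\<lambda>m. (\<lambda>x. inverse (real x)) (Nw n m))"
    define c' where "c' = scl w c"
    have c'S: "c' \<in> Smsp n r k" unfolding c'_def w_def using sinv_app[OF sinv_Smsp c, of "\<lambda>x. inverse (real x)"] by simp
    have dc': "extd c' = (\<lambda>_. 0)" unfolding c'_def w_def
      using extd_scl[of "\<lambda>x. inverse (real x)" n c] dc scl_zero by simp
    have cH: "c \<in> mspan n k (\<lambda>_ _. True)" using c Smsp_Hall by blast
    have eq: "c = extd (koszul n c')"
    proof
      fix m
      have h: "extd (koszul n c') m + koszul n (extd c') m = real (Nw n m) * c' m" by (rule homotopy_all)
      have k0: "koszul n (extd c') m = 0" by (simp add: dc' koszul_zero)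
      have h2: "extd (koszul n c') m = real (Nw n m) * (inverse (real (Nw n m)) * c m)"
        using h k0 unfolding c'_def scl_def w_def by simp
      show "c m = extd (koszul n c') m"
      proof (cases "c m = 0")
        case True then show ?thesis using h2 by simp
      next
        case False
        obtain \<alpha> \<sigma> where m: "m = (\<alpha>,\<sigma>)" by (cases m)
        have P: "\<sigma> \<subseteq> {..<n}" "card \<sigma> = k" using mspan_D[OF cH False[unfolded m]] by auto
        have fs: "finite \<sigma>" using finite_subset[OF P(1)] by simp
        have "\<sigma> \<inter> {..<n} = \<sigma>" using P(1) by auto
        then have "Nw n m \<ge> 1" unfolding m Nw_def using fs P(2) k by simp
        then have "real (Nw n m) \<noteq> 0" by simp
        then show ?thesis using h2 by simp
      qed
    qed
    from Smsp_E[OF c'S] obtain a b where 1: "c' = (\<lambda>m. a m + koszul n b m)" "a \<in> Ssp n (r - 1) k" "b \<in> Ssp n (r - 1) (k + 1)"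
      by (elim exE conjE) (rule that, assumption+)
    have kc': "koszul n c' = koszul n a" unfolding 1(1) koszul_add koszul_koszul by simp
    have "koszul n c' \<in> Smsp n r (k - 1)"
    proof (rule Smsp_I[where a="\<lambda>_. 0" and b=a])
      show "(\<lambda>_. 0) \<in> Ssp n (r - 1) (k - 1)" by (rule cl_zero[OF cl_Ssp])
      show "a \<in> Ssp n (r - 1) (k - 1 + 1)" using 1(2) k by simp
      show "koszul n c' = (\<lambda>m. 0 + koszul n a m)" using kc' by simp
    qed
    then show "c \<in> extd ` Smsp n r (k - 1)" using eq by (rule rev_image_eqI[of _ _ _ extd])
  qed
qed

theorem mainTheorem5:
  fixes n r :: nat
  assumes "n \<ge> 1" and "r \<ge> 1"
  shows "(\<forall>a. constf a \<in> Smsp n r 0)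
    \<and> (\<forall>k<n. extd ` Smsp n r k \<subseteq> Smsp n r (k + 1))
    \<and> {c \<in> Smsp n r 0. extd c = (\<lambda>_. 0)} = range constf
    \<and> (\<forall>k\<in>{1..n}. {c \<in> Smsp n r k. extd c = (\<lambda>_. 0)} = extd ` Smsp n r (k - 1))"
  using constf_Smsp part2 part3 part4 by auto

end
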